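(* Let $\gamma,\alpha>0$, $(Y_i)$ i.i.d. Gamma$(\gamma,1)$, $X_n=\sum_{i=1}^{k_n}\lambda_{i,n}(Y_i-\gamma)$ with $|\lambda_{1,n}|\ge|\lambda_{2,n}|\ge\dots>0$, and assume $X_n+\alpha\to G_\alpha$ in distribution, where $G_\alpha\sim$ Gamma$(\alpha,1)$. Then $$\sup_{n\in\mathbb{N}}\mathbb{E}\Big[\Big(L\big(\Gamma(X_n)-(X_n+\alpha)\big)\Big)^2\Big]<\infty.$$
   Context: Gamma$(\gamma,1)$ has density $\frac{1}{\Gamma(\gamma)}x^{\gamma-1}e^{-x}\mathds{1}_{\{x>0\}}$. Laguerre structure on polynomials in $(Y_i)$: generator $Lf=\sum_i\big(Y_i\partial_i^2f+(\gamma-Y_i)\partial_if\big)$ and carré du champ $\Gamma(f,g)=\sum_iY_i\partial_if\partial_ig$, $\Gamma(X)=\Gamma(X,X)$. *)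

theory Defs
  imports "HOL-Probability.Probability"
begin

definition gamma_density :: "real \<Rightarrow> real \<Rightarrow> real" where
  "gamma_density g x = (if x > 0 then x powr (g - 1) * exp (- x) / Gamma g else 0)"

definition pderiv_coord :: "nat \<Rightarrow> ((nat \<Rightarrow> real) \<Rightarrow> real) \<Rightarrow> (nat \<Rightarrow> real) \<Rightarrow> real" where
  "pderiv_coord i f y = deriv (\<lambda>t. f (y(i := t))) (y i)"

text \<open>Laguerre generator, acting on functions of the variables indexed by the finite
  set I (all other partial derivatives vanish for such functions).\<close>
definition laguerre_L :: "real \<Rightarrow> nat set \<Rightarrow> ((nat \<Rightarrow> real) \<Rightarrow> real) \<Rightarrow> (nat \<Rightarrow> real) \<Rightarrow> real" where
  "laguerre_L g I f y =
     (\<Sum>i\<in>I. y i * pderiv_coord i (pderiv_coord i f) y + (g - y i) * pderiv_coord i f y)"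

definition carre_du_champ :: "nat set \<Rightarrow> ((nat \<Rightarrow> real) \<Rightarrow> real) \<Rightarrow> ((nat \<Rightarrow> real) \<Rightarrow> real)
    \<Rightarrow> (nat \<Rightarrow> real) \<Rightarrow> real" where
  "carre_du_champ I f h y = (\<Sum>i\<in>I. y i * pderiv_coord i f y * pderiv_coord i h y)"

end

theory Submission
  imports Defs
begin


lemma pderiv_affine:
  assumes "finite I" "i \<in> I"
  shows "pderiv_coord i (\<lambda>z. (\<Sum>j\<in>I. a j * z j) + b) y = a i"
proof -
  have eq: "(\<lambda>t. (\<Sum>j\<in>I. a j * (y(i:=t)) j) + b) = (\<lambda>t. a i * t + ((\<Sum>j\<in>I-{i}. a j * y j) + b))"
  proof
    fix t
    have "(\<Sum>j\<in>I. a j * (y(i:=t)) j) = a i * t + (\<Sum>j\<in>I-{i}. a j * (y(i:=t)) j)"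
      using assms by (simp add: sum.remove)
    also have "(\<Sum>j\<in>I-{i}. a j * (y(i:=t)) j) = (\<Sum>j\<in>I-{i}. a j * y j)"
      by (rule sum.cong) auto
    finally show "(\<Sum>j\<in>I. a j * (y(i:=t)) j) + b = a i * t + ((\<Sum>j\<in>I-{i}. a j * y j) + b)" by simp
  qed
  have "((\<lambda>t. a i * t + ((\<Sum>j\<in>I-{i}. a j * y j) + b)) has_real_derivative a i) (at (y i))"
    by (auto intro!: derivative_eq_intros)
  then show ?thesis unfolding pderiv_coord_def eq by (rule DERIV_imp_deriv)
qed

lemma pderiv_const: "pderiv_coord i (\<lambda>z. c) y = 0"
  unfolding pderiv_coord_def by (rule DERIV_imp_deriv) (rule DERIV_const)

lemma laguerre_compute:
  fixes lam :: "nat \<Rightarrow> real" and I :: "nat set"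
  assumes fin: "finite I"
  shows "laguerre_L g I
             (\<lambda>y. carre_du_champ I (\<lambda>z. \<Sum>i\<in>I. lam i * (z i - g))
                                          (\<lambda>z. \<Sum>i\<in>I. lam i * (z i - g)) y
                  - ((\<Sum>i\<in>I. lam i * (y i - g)) + \<alpha>)) y
         = (\<Sum>i\<in>I. (lam i - lam i * lam i) * (y i - g))"
proof -
  have X: "(\<lambda>z. \<Sum>i\<in>I. lam i * (z i - g)) = (\<lambda>z. (\<Sum>j\<in>I. lam j * z j) + (- (g * sum lam I)))"
    by (auto simp: sum_subtractf right_diff_distrib sum_distrib_left mult.commute)
  have dX: "pderiv_coord i (\<lambda>z. \<Sum>i\<in>I. lam i * (z i - g)) y = lam i" if "i \<in> I" for i y
    unfolding X using fin that by (rule pderiv_affine)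
  have C: "carre_du_champ I (\<lambda>z. \<Sum>i\<in>I. lam i * (z i - g)) (\<lambda>z. \<Sum>i\<in>I. lam i * (z i - g)) y
      = (\<Sum>i\<in>I. (lam i * lam i) * y i)" for y
    unfolding carre_du_champ_def by (rule sum.cong) (auto simp: dX)
  have F: "(\<lambda>y. carre_du_champ I (\<lambda>z. \<Sum>i\<in>I. lam i * (z i - g))
                                          (\<lambda>z. \<Sum>i\<in>I. lam i * (z i - g)) y
                  - ((\<Sum>i\<in>I. lam i * (y i - g)) + \<alpha>))
      = (\<lambda>y. (\<Sum>j\<in>I. (lam j * lam j - lam j) * y j) + (g * sum lam I - \<alpha>))"
    unfolding C by (auto simp: sum_subtractf right_diff_distrib left_diff_distrib sum_distrib_left mult.commute)
  have dF: "pderiv_coord i (\<lambda>y. (\<Sum>j\<in>I. (lam j * lam j - lam j) * y j) + (g * sum lam I - \<alpha>))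
     = (\<lambda>y. lam i * lam i - lam i)" if "i \<in> I" for i
    by (rule ext, rule pderiv_affine[OF fin that])
  show ?thesis
    unfolding F laguerre_L_def
  proof (rule sum.cong)
    fix i assume i: "i \<in> I"
    show "y i * pderiv_coord i (pderiv_coord i (\<lambda>y. (\<Sum>j\<in>I. (lam j * lam j - lam j) * y j) + (g * sum lam I - \<alpha>))) y +
        (g - y i) * pderiv_coord i (\<lambda>y. (\<Sum>j\<in>I. (lam j * lam j - lam j) * y j) + (g * sum lam I - \<alpha>)) y =
        (lam i - lam i * lam i) * (y i - g)"
      unfolding dF[OF i] pderiv_const by (simp add: algebra_simps)
  qed simp
qed



lemma gamma_density_nonneg: "g > 0 \<Longrightarrow> gamma_density g x \<ge> 0"
  by (simp add: gamma_density_def)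

lemma gamma_density_measurable[measurable]: "gamma_density g \<in> borel_measurable borel"
  unfolding gamma_density_def by measurable

lemma gamma_moment_nn:
  assumes g: "g > 0"
  shows "(\<integral>\<^sup>+x. ennreal (gamma_density g x * x ^ m) \<partial>lborel) = ennreal (Gamma (g + real m) / Gamma g)"
proof -
  have Gp: "Gamma g > 0" using g by simp
  have pw: "gamma_density g x * x ^ m = (indicator {0..} x * x powr (g + real m - 1) / exp x) * (1 / Gamma g)" for x
  proof (cases "x > 0")
    case True
    have "x powr (g - 1) * x ^ m = x powr (g + real m - 1)"
    proof -
      have e: "g + real m - 1 = (g - 1) + real m" by simp
      show ?thesis using True unfolding e by (simp add: powr_realpow[symmetric] powr_add)
    qed
    then show ?thesis using True
      by (simp add: gamma_density_def exp_minus field_simps)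
  next
    case False
    then show ?thesis by (cases "x = 0") (auto simp: gamma_density_def indicator_def)
  qed
  have "(\<integral>\<^sup>+x. ennreal (gamma_density g x * x ^ m) \<partial>lborel)
     = (\<integral>\<^sup>+x. ennreal (indicator {0..} x * x powr (g + real m - 1) / exp x) * ennreal (1 / Gamma g) \<partial>lborel)"
    unfolding pw by (intro nn_integral_cong, subst ennreal_mult[symmetric]) (auto simp: Gp less_imp_le)
  also have "\<dots> = (\<integral>\<^sup>+x. ennreal (indicator {0..} x * x powr (g + real m - 1) / exp x) \<partial>lborel) * ennreal (1 / Gamma g)"
    by (rule nn_integral_multc) measurable
  also have "\<dots> = ennreal (Gamma (g + real m)) * ennreal (1 / Gamma g)"
    using g by (subst Gamma_conv_nn_integral_real) auto
  also have "\<dots> = ennreal (Gamma (g + real m) / Gamma g)"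
    using g Gp by (simp add: ennreal_mult''[symmetric])
  finally show ?thesis .
qed

lemma gamma_moment_integrable:
  assumes g: "g > 0"
  shows "integrable lborel (\<lambda>x. gamma_density g x * x ^ m)"
proof (rule integrableI_nonneg)
  show "(\<lambda>x. gamma_density g x * x ^ m) \<in> borel_measurable lborel" by measurable
  show "AE x in lborel. 0 \<le> gamma_density g x * x ^ m"
    using g by (auto intro!: AE_I2 simp: gamma_density_def)
  show "(\<integral>\<^sup>+x. ennreal (gamma_density g x * x ^ m) \<partial>lborel) < \<infinity>"
    using gamma_moment_nn[OF g] by simp
qed

lemma gamma_moment:
  assumes g: "g > 0"
  shows "(\<integral>x. gamma_density g x * x ^ m \<partial>lborel) = Gamma (g + real m) / Gamma g"
proof -
  have "(\<integral>x. gamma_density g x * x ^ m \<partial>lborel) = enn2real (\<integral>\<^sup>+x. ennreal (gamma_density g x * x ^ m) \<partial>lborel)"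
    using g by (intro integral_eq_nn_integral) (auto intro!: AE_I2 simp: gamma_density_def)
  then show ?thesis using gamma_moment_nn[OF g] g by simp
qed

lemma gamma_total: "g > 0 \<Longrightarrow> (\<integral>\<^sup>+x. ennreal (gamma_density g x) \<partial>lborel) = 1"
  using gamma_moment_nn[of g 0] Gamma_real_pos[of g] by (simp del: Gamma_real_pos)



lemma abs_pow_le: "p \<le> 4 \<Longrightarrow> \<bar>(x::real) ^ p\<bar> \<le> 1 + x ^ 4"
proof (cases "\<bar>x\<bar> \<le> 1")
  case True
  assume "p \<le> 4"
  have "\<bar>x\<bar> ^ p \<le> 1" using True by (simp add: power_le_one)
  moreover have "0 \<le> x ^ 4" by (simp add: zero_le_even_power)
  ultimately show ?thesis unfolding power_abs by linarith
next
  case False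
  assume p: "p \<le> 4"
  have "\<bar>x\<bar> ^ p \<le> \<bar>x\<bar> ^ 4" using False p by (intro power_increasing) auto
  also have "\<dots> = x ^ 4" by (simp add: power_abs[symmetric] zero_le_even_power)
  finally show ?thesis by (simp add: power_abs)
qed

lemma (in prob_space) integrable_lowpow:
  fixes X :: "'a \<Rightarrow> real"
  assumes "X \<in> borel_measurable M" "integrable M (\<lambda>\<omega>. X \<omega> ^ 4)" "p \<le> 4"
  shows "integrable M (\<lambda>\<omega>. X \<omega> ^ p)"
proof (rule Bochner_Integration.integrable_bound[where f="\<lambda>\<omega>. 1 + X \<omega> ^ 4"])
  show "integrable M (\<lambda>\<omega>. 1 + X \<omega> ^ 4)" using assms by auto
  show "(\<lambda>\<omega>. X \<omega> ^ p) \<in> borel_measurable M" using assms by measurable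
  show "AE \<omega> in M. norm (X \<omega> ^ p) \<le> norm (1 + X \<omega> ^ 4)"
    using abs_pow_le[OF assms(3)] by (auto intro!: AE_I2 simp: zero_le_even_power add_nonneg_nonneg)
qed

lemma (in prob_space) indep_sum_var:
  fixes Z :: "nat \<Rightarrow> 'a \<Rightarrow> real"
  assumes ind: "indep_vars (\<lambda>_. borel) Z UNIV" and fin: "finite J" and j: "j \<notin> J"
  shows "indep_var borel (\<lambda>\<omega>. (\<Sum>i\<in>J. a i * Z i \<omega>) ^ p) borel (\<lambda>\<omega>. Z j \<omega> ^ q)"
proof -
  have r: "indep_var (PiM J (\<lambda>_. borel)) (\<lambda>\<omega>. restrict (\<lambda>i. Z i \<omega>) J)
                     (PiM {j} (\<lambda>_. borel)) (\<lambda>\<omega>. restrict (\<lambda>i. Z i \<omega>) {j})"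
    using j by (intro indep_var_restrict[OF ind]) auto
  have m1: "(\<lambda>f. (\<Sum>i\<in>J. a i * f i) ^ p) \<in> borel_measurable (PiM J (\<lambda>_. borel))"
    by measurable
  have m2: "(\<lambda>f. (f j :: real) ^ q) \<in> borel_measurable (PiM {j} (\<lambda>_. borel))"
  proof -
    have "(\<lambda>f. f j) \<in> measurable (PiM {j} (\<lambda>_. borel)) (borel :: real measure)"
      using measurable_component_singleton[of j "{j}" "\<lambda>_. borel :: real measure"] by simp
    then show ?thesis by (rule borel_measurable_power)
  qed
  have "indep_var borel ((\<lambda>f. (\<Sum>i\<in>J. a i * f i) ^ p) \<circ> (\<lambda>\<omega>. restrict (\<lambda>i. Z i \<omega>) J))
          borel ((\<lambda>f. f j ^ q) \<circ> (\<lambda>\<omega>. restrict (\<lambda>i. Z i \<omega>) {j}))"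
    by (rule indep_var_compose[OF r m1 m2])
  moreover have "((\<lambda>f. (\<Sum>i\<in>J. a i * f i) ^ p) \<circ> (\<lambda>\<omega>. restrict (\<lambda>i. Z i \<omega>) J)) = (\<lambda>\<omega>. (\<Sum>i\<in>J. a i * Z i \<omega>) ^ p)"
    by (auto intro!: ext sum.cong)
  moreover have "((\<lambda>f. f j ^ q) \<circ> (\<lambda>\<omega>. restrict (\<lambda>i. Z i \<omega>) {j})) = (\<lambda>\<omega>. Z j \<omega> ^ q)"
    by auto
  ultimately show ?thesis by simp
qed

lemma (in prob_space) sum_moments:
  fixes Z :: "nat \<Rightarrow> 'a \<Rightarrow> real" and a :: "nat \<Rightarrow> real"
  assumes ind: "indep_vars (\<lambda>_. borel) Z UNIV"
   and int4: "\<And>i. integrable M (\<lambda>\<omega>. Z i \<omega> ^ 4)"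
   and m1: "\<And>i. expectation (Z i) = 0" and m2: "\<And>i. expectation (\<lambda>\<omega>. Z i \<omega> ^ 2) = v"
   and m4: "\<And>i. expectation (\<lambda>\<omega>. Z i \<omega> ^ 4) \<le> c4"
   and fin: "finite J"
  shows "integrable M (\<lambda>\<omega>. (\<Sum>i\<in>J. a i * Z i \<omega>) ^ 4) \<and>
         expectation (\<lambda>\<omega>. \<Sum>i\<in>J. a i * Z i \<omega>) = 0 \<and>
         expectation (\<lambda>\<omega>. (\<Sum>i\<in>J. a i * Z i \<omega>) ^ 2) = v * (\<Sum>i\<in>J. (a i)^2) \<and>
         expectation (\<lambda>\<omega>. (\<Sum>i\<in>J. a i * Z i \<omega>) ^ 4) \<le> 3 * v^2 * (\<Sum>i\<in>J. (a i)^2)^2 + c4 * (\<Sum>i\<in>J. (a i)^4)"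
  using fin
proof (induction J rule: finite_induct)
  case empty show ?case by simp
next
  case (insert j J)
  define S where "S = (\<lambda>\<omega>. \<Sum>i\<in>J. a i * Z i \<omega>)"
  define A where "A = (\<Sum>i\<in>J. (a i)^2)"
  define B where "B = (\<Sum>i\<in>J. (a i)^4)"
  define c where "c = a j"
  from insert.IH have IS4: "integrable M (\<lambda>\<omega>. S \<omega> ^ 4)" and ES: "expectation S = 0"
    and ES2: "expectation (\<lambda>\<omega>. S \<omega>^2) = v * A" and ES4: "expectation (\<lambda>\<omega>. S \<omega>^4) \<le> 3 * v^2 * A^2 + c4 * B"
    unfolding S_def A_def B_def by auto
  have rvZ: "\<And>i. random_variable borel (Z i)" using ind unfolding indep_vars_def by auto
  have rvS: "S \<in> borel_measurable M" unfolding S_def using rvZ by measurable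
  have IS: "integrable M (\<lambda>\<omega>. S \<omega> ^ p)" if "p \<le> 4" for p by (rule integrable_lowpow[OF rvS IS4 that])
  have IZ: "integrable M (\<lambda>\<omega>. Z j \<omega> ^ p)" if "p \<le> 4" for p by (rule integrable_lowpow[OF rvZ int4 that])
  have indp: "indep_var borel (\<lambda>\<omega>. S \<omega> ^ p) borel (\<lambda>\<omega>. Z j \<omega> ^ q)" for p q
    unfolding S_def by (rule indep_sum_var[OF ind insert(1,2)])
  have prodI: "integrable M (\<lambda>\<omega>. S \<omega> ^ p * Z j \<omega> ^ q)" if "p \<le> 4" "q \<le> 4" for p q
    by (rule indep_var_integrable[OF indp IS[OF that(1)] IZ[OF that(2)]])
  have prodE: "expectation (\<lambda>\<omega>. S \<omega> ^ p * Z j \<omega> ^ q) = expectation (\<lambda>\<omega>. S \<omega> ^ p) * expectation (\<lambda>\<omega>. Z j \<omega> ^ q)"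
    if "p \<le> 4" "q \<le> 4" for p q
    by (rule indep_var_lebesgue_integral[OF indp IS[OF that(1)] IZ[OF that(2)]])
  have eq: "(\<Sum>i\<in>insert j J. a i * Z i \<omega>) = S \<omega> + c * Z j \<omega>" for \<omega>
    using insert by (auto simp: S_def c_def)
  have sA: "(\<Sum>i\<in>insert j J. (a i)^2) = c^2 + A" using insert by (simp add: A_def c_def)
  have sB: "(\<Sum>i\<in>insert j J. (a i)^4) = c^4 + B" using insert by (simp add: B_def c_def)
  have I31: "integrable M (\<lambda>\<omega>. S \<omega> ^ 3 * Z j \<omega>)" using prodI[of 3 1] by simp
  have I22: "integrable M (\<lambda>\<omega>. S \<omega> ^ 2 * Z j \<omega> ^ 2)" using prodI[of 2 2] by simp
  have I13: "integrable M (\<lambda>\<omega>. S \<omega> * Z j \<omega> ^ 3)" using prodI[of 1 3] by simp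
  have I11: "integrable M (\<lambda>\<omega>. S \<omega> * Z j \<omega>)" using prodI[of 1 1] by simp
  have E31: "expectation (\<lambda>\<omega>. S \<omega> ^ 3 * Z j \<omega>) = 0" using prodE[of 3 1] m1[of j] by simp
  have E22: "expectation (\<lambda>\<omega>. S \<omega> ^ 2 * Z j \<omega> ^ 2) = v * A * v" using prodE[of 2 2] m2[of j] ES2 by simp
  have E13: "expectation (\<lambda>\<omega>. S \<omega> * Z j \<omega> ^ 3) = 0" using prodE[of 1 3] ES by simp
  have E11: "expectation (\<lambda>\<omega>. S \<omega> * Z j \<omega>) = 0" using prodE[of 1 1] ES by simp
  have IS1: "integrable M S" using IS[of 1] by simp
  have IS2: "integrable M (\<lambda>\<omega>. S \<omega> ^ 2)" using IS[of 2] by simp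
  have IZ1: "integrable M (Z j)" using IZ[of 1] by simp
  have IZ2: "integrable M (\<lambda>\<omega>. Z j \<omega> ^ 2)" using IZ[of 2] by simp
  have e4: "(S \<omega> + c * Z j \<omega>)^4 = S \<omega>^4 + (4*c) * (S \<omega>^3 * Z j \<omega>) + (6*c^2) * (S \<omega>^2 * Z j \<omega>^2)
     + (4*c^3) * (S \<omega> * Z j \<omega>^3) + c^4 * Z j \<omega>^4" for \<omega>
    by (simp add: eval_nat_numeral algebra_simps)
  have e2: "(S \<omega> + c * Z j \<omega>)^2 = S \<omega>^2 + (2*c) * (S \<omega> * Z j \<omega>) + c^2 * Z j \<omega>^2" for \<omega>
    by (simp add: eval_nat_numeral algebra_simps)
  have int4': "integrable M (\<lambda>\<omega>. (S \<omega> + c * Z j \<omega>)^4)"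
    unfolding e4 using IS4 I31 I22 I13 int4[of j] by auto
  have E1: "expectation (\<lambda>\<omega>. S \<omega> + c * Z j \<omega>) = 0"
    using IS1 IZ1 ES m1[of j] by simp
  have E2: "expectation (\<lambda>\<omega>. (S \<omega> + c * Z j \<omega>)^2) = v * (c^2 + A)"
  proof -
    have "expectation (\<lambda>\<omega>. (S \<omega> + c * Z j \<omega>)^2) = v * A + (2*c) * 0 + c^2 * v"
      unfolding e2 using IS2 I11 IZ2 ES2 E11 m2[of j] by simp
    then show ?thesis by (simp add: algebra_simps)
  qed
  have "expectation (\<lambda>\<omega>. (S \<omega> + c * Z j \<omega>)^4) = expectation (\<lambda>\<omega>. S \<omega>^4) + 6*c^2 * (v * A * v) + c^4 * expectation (\<lambda>\<omega>. Z j \<omega>^4)"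
    unfolding e4 using IS4 I31 I22 I13 int4[of j] E31 E22 E13 by simp
  also have "\<dots> \<le> 3 * v^2 * A^2 + c4 * B + 6*c^2 * (v * A * v) + c^4 * c4"
  proof -
    have "c^4 * expectation (\<lambda>\<omega>. Z j \<omega>^4) \<le> c^4 * c4"
      using m4[of j] by (rule mult_left_mono) (simp add: zero_le_even_power)
    then show ?thesis using ES4 by linarith
  qed
  also have "\<dots> \<le> 3 * v^2 * (c^2 + A)^2 + c4 * (c^4 + B)"
  proof -
    have "0 \<le> 3 * v^2 * c^4" by (simp add: zero_le_even_power)
    moreover have "3 * v^2 * (c^2 + A)^2 + c4 * (c^4 + B) - (3 * v^2 * A^2 + c4 * B + 6 * c^2 * (v * A * v) + c^4 * c4) = 3 * v^2 * c^4"
      by (simp add: power2_eq_square eval_nat_numeral algebra_simps)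
    ultimately show ?thesis by linarith
  qed
  finally have E4: "expectation (\<lambda>\<omega>. (S \<omega> + c * Z j \<omega>)^4) \<le> 3 * v^2 * (c^2 + A)^2 + c4 * (c^4 + B)" .
  show ?case unfolding sA sB using int4' E1 E2 E4 by (simp only: eq)
qed



lemma anticonc_pw:
  fixes s a y :: real
  assumes s: "s > 0" and a: "a > 0" and y: "y \<ge> 0"
  shows "a * (y - s/2) / s - a^2/4 * y^2 / s^2 \<le> (if s/2 \<le> y then 1 else 0)"
proof (cases "s/2 \<le> y")
  case False
  have "a * (y - s/2) / s < 0" using False s a by (intro divide_neg_pos mult_pos_neg) auto
  moreover have "0 \<le> a^2/4 * y^2 / s^2" by simp
  moreover have "(if s/2 \<le> y then 1 else 0) = (0::real)" using False by simp
  ultimately show ?thesis by linarith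
next
  case True
  define w where "w = y / s"
  have e1: "a * (y - s/2) / s = a * w - a/2" using s by (simp add: w_def field_simps)
  have e2: "a^2/4 * y^2 / s^2 = a^2 * w^2 / 4" using s by (simp add: w_def field_simps power2_eq_square)
  have "0 \<le> (a * w / 2 - 1)^2" by simp
  then have "a * w - a^2 * w^2 / 4 \<le> 1" by (simp add: power2_eq_square field_simps)
  then show ?thesis unfolding e1 e2 using True a by simp
qed

lemma (in prob_space) anticonc:
  fixes X :: "'a \<Rightarrow> real"
  assumes rv: "X \<in> borel_measurable M" and I4: "integrable M (\<lambda>\<omega>. X \<omega> ^ 4)"
    and s: "expectation (\<lambda>\<omega>. X \<omega> ^ 2) = s" "s > 0" and K: "K > 0"
    and E4: "expectation (\<lambda>\<omega>. X \<omega> ^ 4) \<le> K * s^2"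
  shows "prob {\<omega> \<in> space M. s/2 \<le> X \<omega> ^ 2} \<ge> 1 / (4 * K)"
proof -
  define a where "a = 1 / K"
  have a: "a > 0" using K by (simp add: a_def)
  define E where "E = {\<omega> \<in> space M. s/2 \<le> X \<omega> ^ 2}"
  have Em: "E \<in> events" unfolding E_def using rv by measurable
  have I2: "integrable M (\<lambda>\<omega>. X \<omega> ^ 2)" by (rule integrable_lowpow[OF rv I4]) simp
  define q where "q = (\<lambda>\<omega>. (a/s) * (X \<omega> ^ 2) - a / 2 - (a^2/(4 * s^2)) * X \<omega> ^ 4)"
  have qI: "integrable M q" unfolding q_def using I2 I4 by auto
  have Eq: "expectation q = a/2 - (a^2/(4 * s^2)) * expectation (\<lambda>\<omega>. X \<omega> ^ 4)"
  proof -
    have "expectation q = (a/s) * s - a/2 - (a^2/(4 * s^2)) * expectation (\<lambda>\<omega>. X \<omega> ^ 4)"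
      unfolding q_def using I2 I4 s by (simp add: prob_space)
    then show ?thesis using s by simp
  qed
  have "(a^2/(4 * s^2)) * expectation (\<lambda>\<omega>. X \<omega> ^ 4) \<le> (a^2/(4 * s^2)) * (K * s^2)"
    using E4 by (rule mult_left_mono) simp
  also have "\<dots> = 1 / (4 * K)" using K s by (simp add: a_def field_simps power2_eq_square)
  finally have "expectation q \<ge> 1/(4 * K)" unfolding Eq using K by (simp add: a_def field_simps)
  also have "expectation q \<le> expectation (indicator E)"
  proof (rule integral_mono)
    show "integrable M q" by fact
    show "integrable M (indicator E :: 'a \<Rightarrow> real)" using Em by (intro integrable_real_indicator) (auto simp: emeasure_eq_measure)
    fix \<omega> assume w: "\<omega> \<in> space M"
    have "q \<omega> = a * (X \<omega> ^ 2 - s/2) / s - a^2/4 * (X \<omega> ^ 2)^2 / s^2"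
      unfolding q_def using s by (simp add: field_simps power2_eq_square eval_nat_numeral)
    also have "\<dots> \<le> (if s/2 \<le> X \<omega> ^ 2 then 1 else 0)" by (rule anticonc_pw[OF s(2) a]) simp
    also have "\<dots> = indicator E \<omega>" using w by (simp add: E_def indicator_def)
    finally show "q \<omega> \<le> indicator E \<omega>" .
  qed
  also have "\<dots> = prob E" using Em by simp
  finally show ?thesis unfolding E_def .
qed



lemma (in prob_space) tail_bound:
  fixes W :: "nat \<Rightarrow> 'a \<Rightarrow> real" and G :: "real measure"
  assumes rv: "\<And>n. W n \<in> borel_measurable M"
    and wc: "weak_conv_m (\<lambda>n. distr M borel (W n)) G"
    and G: "real_distribution G" and atom: "\<And>x. measure G {x} = 0"
    and eps: "\<epsilon> > 0"
  shows "\<exists>R>0. \<exists>N. \<forall>n\<ge>N. prob {\<omega> \<in> space M. R < \<bar>W n \<omega>\<bar>} < \<epsilon>"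
proof -
  interpret G: real_distribution G by fact
  have "\<forall>\<^sub>F x in at_top. cdf G x > 1 - \<epsilon>/4"
    using G.cdf_lim_at_top_prob eps by (intro order_tendstoD(1)) auto
  then obtain R1 where R1: "\<And>x. x \<ge> R1 \<Longrightarrow> cdf G x > 1 - \<epsilon>/4"
    unfolding eventually_at_top_linorder by blast
  have "\<forall>\<^sub>F x in at_bot. cdf G x < \<epsilon>/4"
    using G.cdf_lim_at_bot eps by (intro order_tendstoD(2)) auto
  then obtain R2 where R2: "\<And>x. x \<le> R2 \<Longrightarrow> cdf G x < \<epsilon>/4"
    unfolding eventually_at_bot_linorder by blast
  define R where "R = max 1 (max R1 (- R2))"
  have Rpos: "R > 0" unfolding R_def by simp
  have c1: "cdf G R > 1 - \<epsilon>/4" by (rule R1) (simp add: R_def)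
  have c2: "cdf G (-R) < \<epsilon>/4" by (rule R2) (simp add: R_def)
  have cdfn: "cdf (distr M borel (W n)) x = prob {\<omega> \<in> space M. W n \<omega> \<le> x}" for n x
    unfolding cdf_def using rv[of n]
    by (subst measure_distr) (auto intro!: arg_cong[where f=prob])
  have t1: "(\<lambda>n. cdf (distr M borel (W n)) R) \<longlonglongrightarrow> cdf G R"
    using wc unfolding weak_conv_m_def weak_conv_def G.isCont_cdf using atom by blast
  have t2: "(\<lambda>n. cdf (distr M borel (W n)) (-R)) \<longlonglongrightarrow> cdf G (-R)"
    using wc unfolding weak_conv_m_def weak_conv_def G.isCont_cdf using atom by blast
  have "\<forall>\<^sub>F n in sequentially. cdf (distr M borel (W n)) R > 1 - \<epsilon>/2"
    using t1 c1 eps by (intro order_tendstoD(1)) auto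
  moreover have "\<forall>\<^sub>F n in sequentially. cdf (distr M borel (W n)) (-R) < \<epsilon>/2"
    using t2 c2 eps by (intro order_tendstoD(2)) auto
  ultimately have "\<forall>\<^sub>F n in sequentially. cdf (distr M borel (W n)) R > 1 - \<epsilon>/2 \<and> cdf (distr M borel (W n)) (-R) < \<epsilon>/2"
    by (rule eventually_conj)
  then obtain N where N: "\<And>n. n \<ge> N \<Longrightarrow> cdf (distr M borel (W n)) R > 1 - \<epsilon>/2 \<and> cdf (distr M borel (W n)) (-R) < \<epsilon>/2"
    unfolding eventually_sequentially by blast
  have "prob {\<omega> \<in> space M. R < \<bar>W n \<omega>\<bar>} < \<epsilon>" if n: "n \<ge> N" for n
  proof -
    define A where "A = {\<omega> \<in> space M. W n \<omega> \<le> -R}"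
    define B where "B = {\<omega> \<in> space M. W n \<omega> \<le> R}"
    have A: "A \<in> events" and B: "B \<in> events" unfolding A_def B_def using rv[of n] by measurable
    have "prob {\<omega> \<in> space M. R < \<bar>W n \<omega>\<bar>} \<le> prob (A \<union> (space M - B))"
      using A B by (intro finite_measure_mono) (auto simp: A_def B_def)
    also have "\<dots> \<le> prob A + prob (space M - B)"
      using A B by (intro measure_Un_le) auto
    also have "\<dots> = prob A + (1 - prob B)" using B by (simp add: prob_compl)
    also have "\<dots> < \<epsilon>" using N[OF n] unfolding cdfn A_def B_def by linarith
    finally show ?thesis .
  qed
  then show ?thesis using Rpos by blast
qed



lemma (in prob_space) gamma_Z_facts:
  assumes g: "g > 0" and dist: "distributed M lborel X (\<lambda>x. ennreal (gamma_density g x))"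
  shows "integrable M (\<lambda>\<omega>. (X \<omega> - g)^4)" "expectation (\<lambda>\<omega>. X \<omega> - g) = 0"
    "expectation (\<lambda>\<omega>. (X \<omega> - g)^2) = g"
    "expectation (\<lambda>\<omega>. (X \<omega> - g)^4) = (\<integral>x. gamma_density g x * (x - g)^4 \<partial>lborel)"
proof -
  have nn: "\<And>x. 0 \<le> gamma_density g x" using g by (rule gamma_density_nonneg)
  have IY: "integrable M (\<lambda>\<omega>. X \<omega> ^ m)" for m
    using distributed_integrable[OF dist, of "\<lambda>x. x ^ m"] gamma_moment_integrable[OF g, of m] nn by simp
  have EY: "expectation (\<lambda>\<omega>. X \<omega> ^ m) = Gamma (g + real m) / Gamma g" for m
    using distributed_integral[OF dist, of "\<lambda>x. x ^ m"] gamma_moment[OF g, of m] nn by simp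
  have Gp: "Gamma g > 0" using g by simp
  have g1: "Gamma (g + 1) = g * Gamma g" using g by (intro Gamma_plus1) (auto dest: nonpos_Ints_nonpos)
  have g2: "Gamma (g + 2) = (g + 1) * g * Gamma g"
  proof -
    have "Gamma (g + 2) = Gamma ((g + 1) + 1)" by (simp add: add.assoc)
    also have "\<dots> = (g + 1) * Gamma (g + 1)" using g by (intro Gamma_plus1) (auto dest: nonpos_Ints_nonpos)
    finally show ?thesis using g1 by simp
  qed
  have E1: "expectation X = g" using EY[of 1] g1 Gp by simp
  have E2: "expectation (\<lambda>\<omega>. X \<omega> ^ 2) = (g + 1) * g" using EY[of 2] g2 Gp by simp
  have I1: "integrable M X" using IY[of 1] by simp
  have I2: "integrable M (\<lambda>\<omega>. X \<omega> ^ 2)" using IY[of 2] by simp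
  have I3: "integrable M (\<lambda>\<omega>. X \<omega> ^ 3)" using IY[of 3] by simp
  have I4: "integrable M (\<lambda>\<omega>. X \<omega> ^ 4)" using IY[of 4] by simp
  have e4: "(X \<omega> - g)^4 = X \<omega> ^ 4 - (4 * g) * X \<omega> ^ 3 + (6 * g^2) * X \<omega> ^ 2 - (4 * g^3) * X \<omega> + g^4" for \<omega>
    by (simp add: eval_nat_numeral algebra_simps)
  show "integrable M (\<lambda>\<omega>. (X \<omega> - g)^4)" unfolding e4 using I1 I2 I3 I4 by auto
  show "expectation (\<lambda>\<omega>. X \<omega> - g) = 0" using I1 E1 by (simp add: prob_space)
  have e2: "(X \<omega> - g)^2 = X \<omega> ^ 2 - (2 * g) * X \<omega> + g^2" for \<omega>
    by (simp add: eval_nat_numeral algebra_simps)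
  have "expectation (\<lambda>\<omega>. (X \<omega> - g)^2) = (g + 1) * g - (2 * g) * g + g^2"
    unfolding e2 using I1 I2 E1 E2 by (simp add: prob_space)
  then show "expectation (\<lambda>\<omega>. (X \<omega> - g)^2) = g" by (simp add: algebra_simps power2_eq_square)
  show "expectation (\<lambda>\<omega>. (X \<omega> - g)^4) = (\<integral>x. gamma_density g x * (x - g)^4 \<partial>lborel)"
    using distributed_integral[OF dist, of "\<lambda>x. (x - g)^4"] nn by simp
qed



lemma sum_sq_le: "finite I \<Longrightarrow> (\<And>i. i \<in> I \<Longrightarrow> (x i :: real) \<ge> 0) \<Longrightarrow> (\<Sum>i\<in>I. (x i)^2) \<le> (\<Sum>i\<in>I. x i)^2"
proof (induction I rule: finite_induct)
  case (insert j J)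
  have "0 \<le> sum x J" using insert by (intro sum_nonneg) auto
  moreover have "0 \<le> x j" using insert by auto
  ultimately have "0 \<le> 2 * x j * sum x J" by simp
  then show ?case using insert by (simp add: power2_eq_square algebra_simps)
qed simp

lemma gamma_G_facts:
  assumes a: "\<alpha> > 0"
  shows "real_distribution (density lborel (\<lambda>x. ennreal (gamma_density \<alpha> x)))"
    "\<And>x. measure (density lborel (\<lambda>x. ennreal (gamma_density \<alpha> x))) {x} = 0"
proof -
  show "real_distribution (density lborel (\<lambda>x. ennreal (gamma_density \<alpha> x)))"
  proof (rule real_distribution.intro)
    show "prob_space (density lborel (\<lambda>x. ennreal (gamma_density \<alpha> x)))"
      by (rule prob_spaceI) (use gamma_total[OF a] in \<open>simp add: emeasure_density\<close>)
    show "real_distribution_axioms (density lborel (\<lambda>x. ennreal (gamma_density \<alpha> x)))"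
      by (simp add: real_distribution_axioms_def)
  qed
  fix x
  have "emeasure (density lborel (\<lambda>x. ennreal (gamma_density \<alpha> x))) {x} = 0"
    by (simp add: emeasure_density nn_integral_indicator_singleton)
  then show "measure (density lborel (\<lambda>x. ennreal (gamma_density \<alpha> x))) {x} = 0"
    by (simp add: measure_def)
qed



theorem lemma6p5:
  fixes M :: "'a measure" and Y :: "nat \<Rightarrow> 'a \<Rightarrow> real"
    and g \<alpha> :: real and k :: "nat \<Rightarrow> nat" and lam :: "nat \<Rightarrow> nat \<Rightarrow> real"
  assumes "prob_space M"
    and "g > 0" and "\<alpha> > 0"
    and "prob_space.indep_vars M (\<lambda>_. borel) Y UNIV"
    and "\<And>i. distributed M lborel (Y i) (\<lambda>x. ennreal (gamma_density g x))"
    and "\<And>n i. i \<in> {1..k n} \<Longrightarrow> lam n i \<noteq> 0"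
    and "\<And>n i. i \<in> {1..<k n} \<Longrightarrow> \<bar>lam n (Suc i)\<bar> \<le> \<bar>lam n i\<bar>"
    and "weak_conv_m
           (\<lambda>n. distr M borel (\<lambda>\<omega>. (\<Sum>i\<in>{1..k n}. lam n i * (Y i \<omega> - g)) + \<alpha>))
           (density lborel (\<lambda>x. ennreal (gamma_density \<alpha> x)))"
  shows "(SUP n. \<integral>\<^sup>+ \<omega>. ennreal ((laguerre_L g {1..k n}
             (\<lambda>y. carre_du_champ {1..k n} (\<lambda>z. \<Sum>i\<in>{1..k n}. lam n i * (z i - g))
                                          (\<lambda>z. \<Sum>i\<in>{1..k n}. lam n i * (z i - g)) y
                  - ((\<Sum>i\<in>{1..k n}. lam n i * (y i - g)) + \<alpha>))
             (\<lambda>i. Y i \<omega>)) ^ 2) \<partial>M) < \<infinity>"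
proof -
  interpret P: prob_space M by fact
  note g = assms(2) and a = assms(3) and indY = assms(4) and distY = assms(5) and wc = assms(8)
  have rvY: "\<And>i. Y i \<in> borel_measurable M" using indY unfolding P.indep_vars_def by auto
  have indZ: "P.indep_vars (\<lambda>_. borel) (\<lambda>i \<omega>. Y i \<omega> - g) UNIV"
    by (rule P.indep_vars_compose2[OF indY, where Y="\<lambda>i x. x - g"]) simp
  define c4 where "c4 = (\<integral>x. gamma_density g x * (x - g)^4 \<partial>lborel)"
  have c4nn: "c4 \<ge> 0" unfolding c4_def
    by (rule integral_nonneg_AE, rule AE_I2, intro mult_nonneg_nonneg gamma_density_nonneg[OF g]) (simp add: zero_le_even_power)
  note ZF = P.gamma_Z_facts[OF g distY]
  have SM: "integrable M (\<lambda>\<omega>. (\<Sum>i\<in>J. b i * (Y i \<omega> - g)) ^ 4) \<and>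
         P.expectation (\<lambda>\<omega>. \<Sum>i\<in>J. b i * (Y i \<omega> - g)) = 0 \<and>
         P.expectation (\<lambda>\<omega>. (\<Sum>i\<in>J. b i * (Y i \<omega> - g)) ^ 2) = g * (\<Sum>i\<in>J. (b i)^2) \<and>
         P.expectation (\<lambda>\<omega>. (\<Sum>i\<in>J. b i * (Y i \<omega> - g)) ^ 4) \<le> 3 * g^2 * (\<Sum>i\<in>J. (b i)^2)^2 + c4 * (\<Sum>i\<in>J. (b i)^4)"
    if "finite J" for J and b :: "nat \<Rightarrow> real"
    by (rule P.sum_moments[OF indZ])
       (use ZF that in \<open>auto simp: c4_def\<close>)
  define A where "A n = (\<Sum>i\<in>{1..k n}. (lam n i)^2)" for n
  define X where "X n \<omega> = (\<Sum>i\<in>{1..k n}. lam n i * (Y i \<omega> - g))" for n \<omega>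
  have Anng: "A n \<ge> 0" for n unfolding A_def by (intro sum_nonneg) simp
  have rvX: "X n \<in> borel_measurable M" for n unfolding X_def using rvY by measurable
  define K where "K = (3 * g^2 + c4) / g^2"
  have Kpos: "K > 0" unfolding K_def using g c4nn by (intro divide_pos_pos add_pos_nonneg) auto
  define c0 where "c0 = 1 / (4 * K)"
  have c0pos: "c0 > 0" unfolding c0_def using Kpos by simp
  have I4: "integrable M (\<lambda>\<omega>. X n \<omega> ^ 4)" for n using SM[of "{1..k n}" "lam n"] unfolding X_def by simp
  have E2: "P.expectation (\<lambda>\<omega>. X n \<omega> ^ 2) = g * A n" for n using SM[of "{1..k n}" "lam n"] unfolding X_def A_def by simp
  have E4: "P.expectation (\<lambda>\<omega>. X n \<omega> ^ 4) \<le> K * (g * A n)^2" for n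
  proof -
    have B: "(\<Sum>i\<in>{1..k n}. (lam n i)^4) \<le> (A n)^2"
      unfolding A_def using sum_sq_le[of "{1..k n}" "\<lambda>i. (lam n i)^2"] by (simp add: power_mult[symmetric])
    have "P.expectation (\<lambda>\<omega>. X n \<omega> ^ 4) \<le> 3 * g^2 * (A n)^2 + c4 * (\<Sum>i\<in>{1..k n}. (lam n i)^4)"
      using SM[of "{1..k n}" "lam n"] unfolding X_def A_def by simp
    also have "\<dots> \<le> 3 * g^2 * (A n)^2 + c4 * (A n)^2"
      using B c4nn by (simp add: mult_left_mono)
    also have "\<dots> = K * (g * A n)^2" unfolding K_def using g by (simp add: field_simps power2_eq_square)
    finally show ?thesis .
  qed
  obtain R N where Rpos: "R > 0" and RN: "\<And>n. n \<ge> N \<Longrightarrow> P.prob {\<omega> \<in> space M. R < \<bar>X n \<omega> + \<alpha>\<bar>} < c0 / 2"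
    using P.tail_bound[where W="\<lambda>n \<omega>. X n \<omega> + \<alpha>", OF _ _ gamma_G_facts[OF a], of "c0/2"] wc rvX c0pos
    unfolding X_def by auto
  have bnd: "g * A n \<le> 2 * (R + \<alpha>)^2" if n: "n \<ge> N" for n
  proof (rule ccontr)
    assume "\<not> g * A n \<le> 2 * (R + \<alpha>)^2"
    then have sbig: "g * A n > 2 * (R + \<alpha>)^2" by simp
    have spos: "g * A n > 0" using sbig by (smt (verit) zero_le_power2)
    have "c0 \<le> P.prob {\<omega> \<in> space M. g * A n / 2 \<le> X n \<omega> ^ 2}"
      unfolding c0_def by (rule P.anticonc[OF rvX I4 E2 spos Kpos E4])
    also have "\<dots> \<le> P.prob {\<omega> \<in> space M. R < \<bar>X n \<omega> + \<alpha>\<bar>}"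
    proof (rule P.finite_measure_mono)
      show "{\<omega> \<in> space M. R < \<bar>X n \<omega> + \<alpha>\<bar>} \<in> P.events" using rvX[of n] by measurable
      show "{\<omega> \<in> space M. g * A n / 2 \<le> X n \<omega> ^ 2} \<subseteq> {\<omega> \<in> space M. R < \<bar>X n \<omega> + \<alpha>\<bar>}"
      proof safe
        fix \<omega> assume "\<omega> \<in> space M" "g * A n / 2 \<le> X n \<omega> ^ 2"
        then have lt: "(R + \<alpha>)^2 < X n \<omega> ^ 2" using sbig by simp
        have "R + \<alpha> < \<bar>X n \<omega>\<bar>"
        proof (rule ccontr)
          assume "\<not> R + \<alpha> < \<bar>X n \<omega>\<bar>"
          then have "\<bar>X n \<omega>\<bar>^2 \<le> (R + \<alpha>)^2" by (intro power_mono) auto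
          then show False using lt by simp
        qed
        then show "R < \<bar>X n \<omega> + \<alpha>\<bar>" using a by linarith
      qed
    qed
    also have "\<dots> < c0 / 2" by (rule RN[OF n])
    finally show False using c0pos by simp
  qed
  define Ab where "Ab = max (2 * (R + \<alpha>)^2 / g) (Max (A ` {..<N}))"
  have AAb: "A n \<le> Ab" for n
  proof (cases "n < N")
    case True
    then have "A n \<le> Max (A ` {..<N})" by (intro Max_ge) auto
    then show ?thesis unfolding Ab_def by linarith
  next
    case False
    then have "g * A n \<le> 2 * (R + \<alpha>)^2" by (intro bnd) simp
    then have "A n \<le> 2 * (R + \<alpha>)^2 / g" using g by (simp add: field_simps mult.commute)
    then show ?thesis unfolding Ab_def by linarith
  qed
  have each: "(\<integral>\<^sup>+ \<omega>. ennreal ((laguerre_L g {1..k n}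
             (\<lambda>y. carre_du_champ {1..k n} (\<lambda>z. \<Sum>i\<in>{1..k n}. lam n i * (z i - g))
                                          (\<lambda>z. \<Sum>i\<in>{1..k n}. lam n i * (z i - g)) y
                  - ((\<Sum>i\<in>{1..k n}. lam n i * (y i - g)) + \<alpha>))
             (\<lambda>i. Y i \<omega>)) ^ 2) \<partial>M) \<le> ennreal (g * (2 * Ab + 2 * Ab^2))" for n
  proof -
    define cc where "cc i = lam n i - lam n i * lam n i" for i
    have pw: "laguerre_L g {1..k n}
             (\<lambda>y. carre_du_champ {1..k n} (\<lambda>z. \<Sum>i\<in>{1..k n}. lam n i * (z i - g))
                                          (\<lambda>z. \<Sum>i\<in>{1..k n}. lam n i * (z i - g)) y
                  - ((\<Sum>i\<in>{1..k n}. lam n i * (y i - g)) + \<alpha>))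
             (\<lambda>i. Y i \<omega>) = (\<Sum>i\<in>{1..k n}. cc i * (Y i \<omega> - g))" for \<omega>
      unfolding cc_def by (rule laguerre_compute) simp
    have SMc: "integrable M (\<lambda>\<omega>. (\<Sum>i\<in>{1..k n}. cc i * (Y i \<omega> - g)) ^ 4)"
      "P.expectation (\<lambda>\<omega>. (\<Sum>i\<in>{1..k n}. cc i * (Y i \<omega> - g)) ^ 2) = g * (\<Sum>i\<in>{1..k n}. (cc i)^2)"
      using SM[of "{1..k n}" cc] by auto
    have rvc: "(\<lambda>\<omega>. \<Sum>i\<in>{1..k n}. cc i * (Y i \<omega> - g)) \<in> borel_measurable M" using rvY by measurable
    have I2: "integrable M (\<lambda>\<omega>. (\<Sum>i\<in>{1..k n}. cc i * (Y i \<omega> - g)) ^ 2)"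
      by (rule P.integrable_lowpow[OF rvc SMc(1)]) simp
    have "(\<integral>\<^sup>+ \<omega>. ennreal ((laguerre_L g {1..k n}
             (\<lambda>y. carre_du_champ {1..k n} (\<lambda>z. \<Sum>i\<in>{1..k n}. lam n i * (z i - g))
                                          (\<lambda>z. \<Sum>i\<in>{1..k n}. lam n i * (z i - g)) y
                  - ((\<Sum>i\<in>{1..k n}. lam n i * (y i - g)) + \<alpha>))
             (\<lambda>i. Y i \<omega>)) ^ 2) \<partial>M) = (\<integral>\<^sup>+ \<omega>. ennreal ((\<Sum>i\<in>{1..k n}. cc i * (Y i \<omega> - g)) ^ 2) \<partial>M)"
      unfolding pw ..
    also have "\<dots> = ennreal (P.expectation (\<lambda>\<omega>. (\<Sum>i\<in>{1..k n}. cc i * (Y i \<omega> - g)) ^ 2))"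
      by (rule nn_integral_eq_integral[OF I2]) simp
    also have "\<dots> = ennreal (g * (\<Sum>i\<in>{1..k n}. (cc i)^2))" unfolding SMc(2) ..
    also have "\<dots> \<le> ennreal (g * (2 * Ab + 2 * Ab^2))"
    proof (rule ennreal_leI, rule mult_left_mono)
      have "(\<Sum>i\<in>{1..k n}. (cc i)^2) \<le> (\<Sum>i\<in>{1..k n}. 2 * (lam n i)^2 + 2 * ((lam n i)^2)^2)"
      proof (rule sum_mono)
        fix i
        have "0 \<le> (lam n i + lam n i * lam n i)^2" by simp
        then show "(cc i)^2 \<le> 2 * (lam n i)^2 + 2 * ((lam n i)^2)^2"
          unfolding cc_def by (simp add: power2_eq_square algebra_simps)
      qed
      also have "\<dots> = 2 * A n + 2 * (\<Sum>i\<in>{1..k n}. ((lam n i)^2)^2)"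
        unfolding A_def by (simp add: sum.distrib sum_distrib_left)
      also have "\<dots> \<le> 2 * A n + 2 * (A n)^2"
        using sum_sq_le[of "{1..k n}" "\<lambda>i. (lam n i)^2"] unfolding A_def by simp
      also have "\<dots> \<le> 2 * Ab + 2 * Ab^2"
        using AAb[of n] Anng[of n] by (intro add_mono mult_left_mono power_mono) auto
      finally show "(\<Sum>i\<in>{1..k n}. (cc i)^2) \<le> 2 * Ab + 2 * Ab^2" .
      show "0 \<le> g" using g by simp
    qed
    finally show ?thesis .
  qed
  have "(SUP n. \<integral>\<^sup>+ \<omega>. ennreal ((laguerre_L g {1..k n}
             (\<lambda>y. carre_du_champ {1..k n} (\<lambda>z. \<Sum>i\<in>{1..k n}. lam n i * (z i - g))
                                          (\<lambda>z. \<Sum>i\<in>{1..k n}. lam n i * (z i - g)) y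
                  - ((\<Sum>i\<in>{1..k n}. lam n i * (y i - g)) + \<alpha>))
             (\<lambda>i. Y i \<omega>)) ^ 2) \<partial>M) \<le> ennreal (g * (2 * Ab + 2 * Ab^2))"
    by (rule SUP_least) (rule each)
  also have "\<dots> < \<infinity>" by simp
  finally show ?thesis .
qed

end
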